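(* Let $P,Q$ be probability measures on $(\mathcal X,\mathcal F)$ with $P\ll Q$, let $\psi$ be an Orlicz function, and let $E\in\mathcal F$. Then for every $\gamma\in\mathbb R$, $$P(E)\le \gamma\,Q(E)+\frac{1}{\psi^{-1}(1/Q(E))}\cdot\Big\Vert\Big[\frac{\mathrm dP}{\mathrm dQ}-\gamma\Big]_+\Big\Vert^{A,Q}_{\psi^\star}.$$
   Context: An Orlicz function is a convex $\psi:[0,\infty)\to[0,\infty]$ with $\psi(0)=0$ that is not identically $0$ or identically $\infty$ on $(0,\infty)$. Its conjugate is $\psi^\star(t):=\sup_{\lambda>0}(\lambda t-\psi(\lambda))$, and its generalized inverse is $\psi^{-1}(s):=\inf\{t\ge0:\psi(t)\ge s\}$ for $s\ge0$, with conventions $1/0=\infty$, $\psi^{-1}(\infty)=\infty$, $1/\infty=0$. For a probability measure $\mu$ and measurable $U$, the Luxemburg norm is $\Vert U\Vert^\mu_\psi:=\inf\{\sigma>0:\mathbf E_\mu[\psi(|U|/\sigma)]\le1\}$ and the Amemiya norm is $\Vert U\Vert^{A,\mu}_\psi:=\inf\{(\mathbf E_\mu[\psi(t|U|)]+1)/t:\ t>0\}$. $[x]_+:=\max\{x,0\}$. *)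

theory Defs
  imports "HOL-Probability.Probability"
begin

text \<open>Orlicz functions are modelled as functions real => ennreal; only their values
on [0,\<infinity>) matter.\<close>

definition orlicz :: "(real \<Rightarrow> ennreal) \<Rightarrow> bool" where
  "orlicz psi \<longleftrightarrow>
     psi 0 = 0 \<and>
     (\<forall>x y t. 0 \<le> x \<longrightarrow> 0 \<le> y \<longrightarrow> 0 \<le> t \<longrightarrow> t \<le> 1 \<longrightarrow>
        psi ((1 - t) * x + t * y) \<le> ennreal (1 - t) * psi x + ennreal t * psi y) \<and>
     \<not> (\<forall>t>0. psi t = 0) \<and>
     \<not> (\<forall>t>0. psi t = \<infinity>)"

definition orlicz_conj :: "(real \<Rightarrow> ennreal) \<Rightarrow> real \<Rightarrow> ennreal" where
  "orlicz_conj psi t = e2ennreal (SUP l\<in>{0<..}. ereal (l * t) - enn2ereal (psi l))"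

definition orlicz_inv :: "(real \<Rightarrow> ennreal) \<Rightarrow> ennreal \<Rightarrow> ennreal" where
  "orlicz_inv psi s =
     (if s = \<infinity> then \<infinity> else Inf {ennreal t | t. 0 \<le> t \<and> s \<le> psi t})"

definition amemiya_norm :: "(real \<Rightarrow> ennreal) \<Rightarrow> 'a measure \<Rightarrow> ('a \<Rightarrow> real) \<Rightarrow> ennreal" where
  "amemiya_norm psi mu U =
     (INF t\<in>{0<..}. ((\<integral>\<^sup>+ x. psi (t * \<bar>U x\<bar>) \<partial>mu) + 1) / ennreal t)"

end

theory Submission
  imports Defs
begin

lemma young:
  assumes "l > 0"
  shows "ennreal (l * u) - psi l \<le> orlicz_conj psi u"
proof (cases "psi l = \<infinity>")
  case True then show ?thesis by simp
next
  case False
  then obtain r where r: "psi l = ennreal r" "0 \<le> r" by (cases "psi l") auto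
  have "ereal (l * u) - enn2ereal (psi l) \<le> (SUP l\<in>{0<..}. ereal (l * u) - enn2ereal (psi l))"
    using assms by (intro SUP_upper) auto
  hence "e2ennreal (ereal (l * u - r)) \<le> e2ennreal (SUP l\<in>{0<..}. ereal (l * u) - enn2ereal (psi l))"
    using r by (intro e2ennreal_mono) auto
  hence "e2ennreal (ereal (l * u - r)) \<le> orlicz_conj psi u"
    unfolding orlicz_conj_def .
  moreover have "ennreal (l * u) - psi l = e2ennreal (ereal (l * u - r))"
    using r by (simp add: ennreal_minus)
  ultimately show ?thesis by simp
qed


lemma orlicz_scale:
  assumes "orlicz psi" "0 \<le> t" "t \<le> 1" "0 \<le> y"
  shows "psi (t * y) \<le> ennreal t * psi y"
proof -
  have "psi ((1 - t) * 0 + t * y) \<le> ennreal (1 - t) * psi 0 + ennreal t * psi y"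
    using assms unfolding orlicz_def by blast
  moreover have "psi 0 = 0" using assms unfolding orlicz_def by blast
  ultimately show ?thesis by simp
qed

lemma inv_bounds:
  assumes psi: "orlicz psi" and c: "0 < c"
  shows "0 < orlicz_inv psi (ennreal c)" "orlicz_inv psi (ennreal c) < \<infinity>"
    "\<And>l. 0 \<le> l \<Longrightarrow> ennreal l < orlicz_inv psi (ennreal c) \<Longrightarrow> psi l < ennreal c"
proof -
  define S where "S = orlicz_inv psi (ennreal c)"
  have S: "S = Inf {ennreal t | t. 0 \<le> t \<and> ennreal c \<le> psi t}"
    unfolding S_def orlicz_inv_def by simp
  have low: "S \<le> ennreal l" if "0 \<le> l" "ennreal c \<le> psi l" for l
    unfolding S using that by (intro Inf_lower) auto
  show "\<And>l. 0 \<le> l \<Longrightarrow> ennreal l < orlicz_inv psi (ennreal c) \<Longrightarrow> psi l < ennreal c"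
    using low unfolding S_def[symmetric] by (meson leD not_le)
  obtain a where a: "a > 0" "psi a \<noteq> \<infinity>" using psi unfolding orlicz_def by auto
  then obtain r where r: "psi a = ennreal r" "0 \<le> r" by (cases "psi a") auto
  define b where "b = a * c / (r + c)"
  have b: "0 < b" "b \<le> a" using a r c by (auto simp: b_def field_simps)
  have "ennreal b \<le> S"
    unfolding S
  proof (rule Inf_greatest, clarify)
    fix t assume t: "0 \<le> t" "ennreal c \<le> psi t"
    show "ennreal b \<le> ennreal t"
    proof (rule ccontr)
      assume "\<not> ?thesis"
      hence tb: "t < b" using t by (simp add: ennreal_le_iff2 not_le)
      have "psi t = psi ((t / a) * a)" using a by simp
      also have "\<dots> \<le> ennreal (t / a) * psi a"
        using a b tb t by (intro orlicz_scale[OF psi]) auto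
      also have "\<dots> = ennreal (t / a * r)" using r t a by (simp only: r(1) ennreal_mult[symmetric] divide_nonneg_pos)
      also have "\<dots> < ennreal c"
      proof -
        have "t / a * r \<le> b / a * r" using tb a r by (intro mult_right_mono divide_right_mono) auto
        also have "\<dots> = c * r / (r + c)" using a by (simp add: b_def)
        also have "\<dots> < c" using c r by (simp add: field_simps)
        finally show ?thesis using c by (intro ennreal_lessI) auto
      qed
      finally show False using t by simp
    qed
  qed
  thus "0 < orlicz_inv psi (ennreal c)" using b unfolding S_def
    by (metis ennreal_less_zero_iff order_less_le_trans)
  obtain a where a: "a > 0" "psi a \<noteq> 0" using psi unfolding orlicz_def by auto
  show "orlicz_inv psi (ennreal c) < \<infinity>"
  proof (cases "psi a = \<infinity>")
    case True
    hence "S \<le> ennreal a" using a by (intro low) auto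
    thus ?thesis unfolding S_def by (simp add: order_le_less_trans)
  next
    case False
    then obtain r where r: "psi a = ennreal r" "0 < r" using a by (cases "psi a") auto
    define N where "N = max 1 (c / r)"
    have N1: "N \<ge> 1" by (simp add: N_def)
    have "N * r \<ge> c / r * r" unfolding N_def using r by (intro mult_right_mono) auto
    hence N: "N \<ge> 1" "N * r \<ge> c" using r N1 by auto
    have "psi a = psi ((1 / N) * (N * a))" using N by simp
    also have "\<dots> \<le> ennreal (1 / N) * psi (N * a)"
      using N a by (intro orlicz_scale[OF psi]) auto
    finally have "ennreal N * psi a \<le> ennreal N * ennreal (1 / N) * psi (N * a)"
      by (simp add: mult.assoc mult_left_mono)
    also have "ennreal N * ennreal (1 / N) = 1" using N
      by (simp flip: ennreal_mult)
    finally have "ennreal (N * r) \<le> psi (N * a)" using r N by (simp add: ennreal_mult)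
    hence "ennreal c \<le> psi (N * a)" using N by (meson ennreal_leI order_trans)
    hence "S \<le> ennreal (N * a)" using a N by (intro low) auto
    thus ?thesis unfolding S_def by (simp add: order_le_less_trans)
  qed
qed


lemma sup_step:
  fixes G A :: ennreal
  assumes s: "0 < s" and H: "\<And>l. 0 < l \<Longrightarrow> l < s \<Longrightarrow> ennreal l * G \<le> A"
  shows "G \<le> 1 / ennreal s * A"
proof -
  have "G * ennreal s \<le> A"
  proof (rule dense_le)
    fix x assume x: "x < G * ennreal s"
    show "x \<le> A"
    proof (cases "G = \<infinity>")
      case True
      have "ennreal (s/2) * G \<le> A" using s by (intro H) auto
      moreover have "ennreal (s/2) * G = \<infinity>" using True s by simp
      ultimately have "A = \<infinity>" by (simp add: top_unique)
      thus ?thesis by simp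
    next
      case False
      then obtain g0 where g0: "G = ennreal g0" "0 \<le> g0" by (cases G) auto
      have Ge: "G * ennreal s = ennreal (g0 * s)" using g0 s by (simp add: ennreal_mult)
      have "x < top" using x unfolding Ge by (rule order.strict_trans[OF _ ennreal_less_top])
      then obtain x0 where x0: "x = ennreal x0" "0 \<le> x0" by (cases x) auto
      have lt: "x0 < g0 * s" using x x0 g0 s unfolding Ge by (simp add: ennreal_less_iff)
      hence gp: "g0 > 0" using x0 g0 s by (cases "g0 = 0") auto
      define l where "l = max (x0 / g0) (s/2)"
      have l: "0 < l" "l < s" using lt gp s by (auto simp: l_def field_simps)
      have "x0 = (x0 / g0) * g0" using gp by simp
      also have "\<dots> \<le> l * g0" using gp by (intro mult_right_mono) (auto simp: l_def)
      finally have "x0 \<le> l * g0" .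
      hence "ennreal x0 \<le> ennreal (l * g0)" by (rule ennreal_leI)
      hence "x \<le> ennreal l * G" using x0 g0 l by (simp add: ennreal_mult)
      also have "\<dots> \<le> A" using l by (rule H)
      finally show ?thesis .
    qed
  qed
  hence "\<not> A / ennreal s < G" using s by (subst divide_less_ennreal) auto
  thus ?thesis by (simp add: not_less ennreal_divide_times)
qed


theorem theorem2:
  fixes P Q :: "'a measure" and psi :: "real \<Rightarrow> ennreal" and E :: "'a set" and \<gamma> :: real
  assumes "prob_space P" and "prob_space Q" and "sets P = sets Q"
    and "absolutely_continuous Q P"
    and "orlicz psi"
    and "E \<in> sets Q"
  shows "ereal (measure P E) \<le>
           ereal (\<gamma> * measure Q E)
           + enn2ereal ((1 / orlicz_inv psi (1 / emeasure Q E))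
               * amemiya_norm (orlicz_conj psi) Q
                   (\<lambda>x. max (enn2real (RN_deriv Q P x) - \<gamma>) 0))"
proof -
  interpret Q: prob_space Q by fact
  interpret P: prob_space P by fact
  note psi = assms(5)
  note E[measurable] = assms(6)
  have EP: "E \<in> sets P" using assms(3) E by simp
  define f where "f x = enn2real (RN_deriv Q P x)" for x
  define g where "g x = max (f x - \<gamma>) 0" for x
  have fm[measurable]: "f \<in> borel_measurable Q" unfolding f_def by measurable
  have gm[measurable]: "g \<in> borel_measurable Q" unfolding g_def by measurable
  define G where "G = (\<integral>\<^sup>+x. indicator E x * ennreal (g x) \<partial>Q)"
  define q where "q = measure Q E"
  have eQ: "emeasure Q E = ennreal q" unfolding q_def by (simp add: Q.emeasure_eq_measure)
  have q: "0 \<le> q" "q \<le> 1" unfolding q_def by auto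
  define A where "A = amemiya_norm (orlicz_conj psi) Q g"
  have PE: "emeasure P E = (\<integral>\<^sup>+x. indicator E x * ennreal (f x) \<partial>Q)"
  proof -
    have "emeasure P E = emeasure (density Q (RN_deriv Q P)) E"
      using Q.density_RN_deriv[OF assms(4) assms(3)] by simp
    also have "\<dots> = (\<integral>\<^sup>+x. RN_deriv Q P x * indicator E x \<partial>Q)"
      by (rule emeasure_density) auto
    also have "\<dots> = (\<integral>\<^sup>+x. indicator E x * ennreal (f x) \<partial>Q)"
    proof (rule nn_integral_cong_AE)
      have "AE x in Q. RN_deriv Q P x \<noteq> \<infinity>"
        using Q.RN_deriv_finite[OF _ assms(4) assms(3)] P.sigma_finite_measure_axioms by blast
      thus "AE x in Q. RN_deriv Q P x * indicator E x = indicator E x * ennreal (f x)"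
        by eventually_elim (auto simp: f_def less_top ennreal_enn2real_if mult.commute)
    qed
    finally show ?thesis .
  qed
  have gnn: "0 \<le> g x" for x by (simp add: g_def)
  have main: "G \<le> (1 / orlicz_inv psi (1 / emeasure Q E)) * A"
  proof (cases "q = 0")
    case True
    have "E \<in> null_sets Q" using eQ True E by (simp add: null_sets_def)
    hence "AE x in Q. x \<notin> E" by (rule AE_not_in)
    hence "G = (\<integral>\<^sup>+x. 0 \<partial>Q)" unfolding G_def
      by (intro nn_integral_cong_AE) (auto elim!: eventually_mono)
    thus ?thesis by simp
  next
    case False
    hence qp: "0 < q" using q by simp
    have inv1: "1 / emeasure Q E = ennreal (1 / q)"
      unfolding eQ using qp divide_ennreal[of 1 q] by simp
    have cp: "0 < 1 / q" using qp by simp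
    note ib = inv_bounds[OF psi cp]
    obtain s where s: "orlicz_inv psi (ennreal (1 / q)) = ennreal s" "0 \<le> s"
      using ib(2) by (cases "orlicz_inv psi (ennreal (1 / q))") auto
    have sp: "0 < s" using ib(1) s by simp
    have "G \<le> 1 / ennreal s * A"
    proof (rule sup_step[OF sp])
      fix l assume l: "0 < l" "l < s"
      have psil: "psi l < ennreal (1 / q)"
        using l s by (intro ib(3)) (auto simp: ennreal_lessI)
      then obtain r where r: "psi l = ennreal r" "0 \<le> r" "r < 1 / q"
        by (cases "psi l") (auto simp: ennreal_less_iff)
      have psiq: "psi l * emeasure Q E \<le> 1"
      proof -
        have "r * q \<le> 1" using r qp by (simp add: field_simps)
        thus ?thesis unfolding eQ r(1) using r q by (simp flip: ennreal_mult)
      qed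
      show "ennreal l * G \<le> A"
        unfolding A_def amemiya_norm_def
      proof (rule INF_greatest)
        fix t :: real assume "t \<in> {0<..}"
        hence t: "0 < t" by simp
        have "ennreal t * (ennreal l * G)
            = (\<integral>\<^sup>+x. indicator E x * ennreal (l * (t * \<bar>g x\<bar>)) \<partial>Q)"
        proof -
          have "ennreal t * (ennreal l * G) = (\<integral>\<^sup>+x. (ennreal t * ennreal l) * (indicator E x * ennreal (g x)) \<partial>Q)"
            unfolding G_def by (subst nn_integral_cmult) (auto simp: mult.assoc)
          also have "\<dots> = (\<integral>\<^sup>+x. indicator E x * ennreal (l * (t * \<bar>g x\<bar>)) \<partial>Q)"
            using t l gnn by (intro nn_integral_cong) (auto simp: ennreal_mult indicator_def mult_ac)
          finally show ?thesis .
        qed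
        also have "\<dots> \<le> (\<integral>\<^sup>+x. psi l * indicator E x + (ennreal (l * (t * \<bar>g x\<bar>)) - psi l) \<partial>Q)"
        proof (rule nn_integral_mono)
          fix x
          show "indicator E x * ennreal (l * (t * \<bar>g x\<bar>)) \<le> psi l * indicator E x + (ennreal (l * (t * \<bar>g x\<bar>)) - psi l)"
          proof (cases "x \<in> E")
            case True
            show ?thesis
            proof (cases "psi l \<le> ennreal (l * (t * \<bar>g x\<bar>))")
              case True
              thus ?thesis using \<open>x \<in> E\<close> by (simp add: add_diff_inverse_ennreal)
            next
              case False
              thus ?thesis using \<open>x \<in> E\<close> by (simp add: add_increasing2 not_le less_imp_le) 
            qed
          qed simp
        qed
        also have "\<dots> = psi l * emeasure Q E + (\<integral>\<^sup>+x. ennreal (l * (t * \<bar>g x\<bar>)) - psi l \<partial>Q)"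
          by (subst nn_integral_add) (auto simp: nn_integral_cmult_indicator)
        also have "\<dots> \<le> 1 + (\<integral>\<^sup>+x. orlicz_conj psi (t * \<bar>g x\<bar>) \<partial>Q)"
          using psiq young[OF l(1)] by (intro add_mono nn_integral_mono) (auto simp: mult.assoc)
        finally have le: "ennreal t * (ennreal l * G) \<le> (\<integral>\<^sup>+x. orlicz_conj psi (t * \<bar>g x\<bar>) \<partial>Q) + 1"
          by (simp add: add.commute)
        have "\<not> (\<integral>\<^sup>+x. orlicz_conj psi (t * \<bar>g x\<bar>) \<partial>Q) + 1 < ennreal l * G * ennreal t"
          using le by (simp add: not_less mult.commute)
        thus "ennreal l * G \<le> ((\<integral>\<^sup>+x. orlicz_conj psi (t * \<bar>g x\<bar>) \<partial>Q) + 1) / ennreal t"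
          using t by (subst (asm) divide_less_ennreal[symmetric]) (auto simp: not_less)
      qed
    qed
    thus ?thesis unfolding inv1 s(1) .
  qed
  have mPE: "enn2ereal (emeasure P E) = ereal (measure P E)"
    by (simp add: P.emeasure_eq_measure)
  have fnn: "0 \<le> f x" for x by (simp add: f_def)
  have comb: "ereal (measure P E) \<le> ereal (\<gamma> * q) + enn2ereal G"
  proof (cases "0 \<le> \<gamma>")
    case True
    have "emeasure P E \<le> (\<integral>\<^sup>+x. ennreal \<gamma> * indicator E x + indicator E x * ennreal (g x) \<partial>Q)"
      unfolding PE
    proof (rule nn_integral_mono)
      fix x
      have "ennreal (f x) \<le> ennreal (\<gamma> + g x)" by (rule ennreal_leI) (simp add: g_def)
      also have "\<dots> = ennreal \<gamma> + ennreal (g x)" using True gnn by (simp add: ennreal_plus)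
      finally show "indicator E x * ennreal (f x) \<le> ennreal \<gamma> * indicator E x + indicator E x * ennreal (g x)"
        by (auto simp: indicator_def)
    qed
    also have "\<dots> = ennreal \<gamma> * emeasure Q E + G"
      unfolding G_def by (subst nn_integral_add) (auto simp: nn_integral_cmult_indicator)
    also have "\<dots> = ennreal (\<gamma> * q) + G" using True q by (simp add: eQ ennreal_mult)
    finally have "enn2ereal (emeasure P E) \<le> enn2ereal (ennreal (\<gamma> * q) + G)"
      by (simp add: less_eq_ennreal.rep_eq)
    thus ?thesis unfolding mPE using True q by (simp add: plus_ennreal.rep_eq)
  next
    case False
    have "G = (\<integral>\<^sup>+x. indicator E x * ennreal (f x) + ennreal (- \<gamma>) * indicator E x \<partial>Q)"
      unfolding G_def
    proof (rule nn_integral_cong)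
      fix x
      have "g x = f x + (- \<gamma>)" using False fnn[of x] by (simp add: g_def)
      hence "ennreal (g x) = ennreal (f x) + ennreal (- \<gamma>)" using False fnn[of x]
        by (simp only: ennreal_plus[symmetric])
      thus "indicator E x * ennreal (g x) = indicator E x * ennreal (f x) + ennreal (- \<gamma>) * indicator E x"
        by (auto simp: indicator_def)
    qed
    also have "\<dots> = emeasure P E + ennreal (- \<gamma>) * emeasure Q E"
      unfolding PE by (subst nn_integral_add) (auto simp: nn_integral_cmult_indicator)
    also have "\<dots> = emeasure P E + ennreal (- \<gamma> * q)" using False q
      by (simp only: eQ ennreal_mult[symmetric])
    moreover have "0 \<le> - \<gamma> * q" using False q by (simp add: mult_nonpos_nonneg)
    ultimately have "enn2ereal G = ereal (measure P E) + ereal (- \<gamma> * q)"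
      by (simp add: plus_ennreal.rep_eq mPE)
    thus ?thesis by simp
  qed
  have "ereal (measure P E) \<le> ereal (\<gamma> * q) + enn2ereal ((1 / orlicz_inv psi (1 / emeasure Q E)) * A)"
    using comb main by (meson add_left_mono less_eq_ennreal.rep_eq order_trans)
  thus ?thesis unfolding A_def q_def g_def f_def .
qed

end
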